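(* Let $N>1$ be an integer and let $C_1,C_2>0$. For $0<y\le 1$, coprime integers $p,q$ with $q\ge1$ and $0<p/q\le 1$, and real $\delta$, define \[ T_y=\frac{1}{q\,(y+2i\delta)^{1/2}}\sum_{m=-\infty}^{\infty} S\!\left(\frac{p}{q},\frac{m}{q}\right)\exp\!\left(-\frac{\pi}{y+2i\delta}\Big(\frac{m}{q}-\frac{1}{N}\Big)^2\right), \qquad S\!\left(\frac{p}{q},t\right)=\sum_{\ell=1}^{q}e^{2\pi i\left(\frac{p}{q}\ell^2+t\ell\right)}. \] Then there is a constant $C$ (independent of $y,p,q,\delta$) such that whenever $q\le C_1 y^{-1/2}$ and $q|\delta|\le C_2 y^{1/2}$ (so that $x=p/q+\delta$ is close to $p/q$): if $N\mid q$, then \[ \left|T_y-S\!\left(\frac{p}{q},\frac{1}{N}\right)\frac{1}{q\,(y+2i\delta)^{1/2}}\right|\le C\,y^{-1/4}; \] and if $N\nmid q$, then $|T_y|\le C\,y^{-1/4}$.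
   Context: $(y+2i\delta)^{1/2}$ denotes the principal branch of the square root (the argument $y+2i\delta$ lies in the right half-plane). *)

theory Defs
  imports "HOL-Analysis.Analysis"
begin

definition gauss_S :: "int \<Rightarrow> int \<Rightarrow> real \<Rightarrow> complex" where
  "gauss_S p q t = (\<Sum>l=1..q. exp (2 * pi * \<i> *
      complex_of_real ((real_of_int p / real_of_int q) * (real_of_int l)^2 + t * real_of_int l)))"

text \<open>T_y; csqrt is the principal branch of the square root; the sum over m in Z is
  an (absolutely convergent) infinite sum over the integers.\<close>
definition T_y :: "nat \<Rightarrow> real \<Rightarrow> int \<Rightarrow> int \<Rightarrow> real \<Rightarrow> complex" where
  "T_y N y p q \<delta> =
     1 / (of_int q * csqrt (complex_of_real y + 2 * \<i> * complex_of_real \<delta>)) *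
     infsum (\<lambda>m::int. gauss_S p q (real_of_int m / real_of_int q) *
        exp (- (complex_of_real pi / (complex_of_real y + 2 * \<i> * complex_of_real \<delta>)) *
             complex_of_real ((real_of_int m / real_of_int q - 1 / real N)^2))) UNIV"

end

theory Submission
  imports Defs
begin

definition ee :: "real \<Rightarrow> complex" where
  "ee x = exp (2 * pi * \<i> * complex_of_real x)"

lemma ee_add: "ee (x + y) = ee x * ee y"
  unfolding ee_def by (simp add: distrib_left exp_add)

lemma ee_int: "ee (of_int k) = 1"
proof -
  show ?thesis unfolding ee_def exp_eq_1
    by (auto intro!: exI[of _ k])
qed

lemma norm_ee [simp]: "norm (ee x) = 1"
  unfolding ee_def by simp

lemma cnj_ee: "cnj (ee x) = ee (- x)"
  unfolding ee_def by (simp add: exp_cnj)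

lemma ee_pow: "ee x ^ n = ee (real n * x)"
  unfolding ee_def by (simp add: exp_of_nat_mult[symmetric] mult_ac)

lemma ee_eq_1: "ee x = 1 \<Longrightarrow> \<exists>k::int. x = of_int k"
proof -
  assume "ee x = 1"
  then have "exp (complex_of_real (2 * pi * x) * \<i>) = 1"
    unfolding ee_def by (simp add: mult_ac)
  then obtain n :: int where "2 * pi * x = of_int (2 * n) * pi"
    unfolding exp_eq_1 by auto
  then have "x = of_int n" by simp
  then show ?thesis by blast
qed

lemma periodic_shift_sum:
  fixes F :: "int \<Rightarrow> complex"
  assumes per: "\<And>l. F (l + int n) = F l"
  shows "(\<Sum>i<n. F (a + int i)) = (\<Sum>i<n. F (int i))"
proof -
  define G where "G a = (\<Sum>i<n. F (a + int i))" for a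
  have step: "G (a + 1) = G a" for a
  proof -
    have "G (a + 1) + F a = (\<Sum>i<Suc n. F (a + int i))"
      unfolding G_def by (subst sum.lessThan_Suc_shift) (simp add: add_ac)
    also have "\<dots> = G a + F (a + int n)"
      unfolding G_def by simp
    finally show ?thesis using per[of a] by simp
  qed
  have "G a = G 0"
  proof (induction a rule: int_induct[where k = 0])
    case base then show ?case by simp
  next
    case (step1 i) then show ?case using step[of i] by simp
  next
    case (step2 i) then show ?case using step[of "i - 1"] by simp
  qed
  then show ?thesis unfolding G_def by simp
qed

lemma count_bound:
  fixes n :: nat
  shows "(\<Sum>h<n. if int n dvd 2 * int h then real n else 0) \<le> 2 * real n"
proof -
  have sub: "{h. h < n \<and> int n dvd 2 * int h} \<subseteq> {0, n div 2}"
  proof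
    fix h assume "h \<in> {h. h < n \<and> int n dvd 2 * int h}"
    then have h: "h < n" "int n dvd 2 * int h" by auto
    then obtain k where k: "2 * int h = int n * k" by (auto elim: dvdE)
    have n0: "int n > 0" using h(1) by simp
    have "int n * k < int n * 2" using k h(1) by linarith
    then have "k < 2" using n0 by (simp add: mult_less_cancel_left)
    moreover have "0 \<le> int n * k" using k[symmetric] by simp
    then have "k \<ge> 0" using n0 by (simp add: zero_le_mult_iff)
    ultimately have "k \<ge> 0" "k < 2" by auto
    then have "k = 0 \<or> k = 1" by auto
    then show "h \<in> {0, n div 2}" using k by auto
  qed
  have "(\<Sum>h<n. if int n dvd 2 * int h then real n else 0)
        = (\<Sum>h\<in>{h. h < n \<and> int n dvd 2 * int h}. real n)"
    by (simp add: sum.If_cases Int_def lessThan_def conj_commute)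
  also have "\<dots> = real (card {h. h < n \<and> int n dvd 2 * int h}) * real n" by simp
  also have "\<dots> \<le> 2 * real n"
  proof -
    have "card {h. h < n \<and> int n dvd 2 * int h} \<le> card {0, n div 2}"
      by (rule card_mono) (use sub in auto)
    also have "\<dots> \<le> 2" by (simp add: card_insert_if)
    finally show ?thesis by (simp add: mult_right_mono)
  qed
  finally show ?thesis .
qed

lemma gauss_bound:
  assumes q: "q \<ge> 1" and cop: "coprime p q"
  shows "cmod (gauss_S p q (real_of_int m / real_of_int q)) \<le> sqrt (2 * real_of_int q)"
proof -
  define n where "n = nat q"
  have qn: "q = int n" using q unfolding n_def by simp
  have qr: "real_of_int q = real n" using qn by simp
  have qne: "real_of_int q \<noteq> 0" using q by simp
  define F where "F l = ee ((real_of_int p / real_of_int q) * (real_of_int l)^2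
      + (real_of_int m / real_of_int q) * real_of_int l)" for l :: int
  have per: "F (l + int n) = F l" for l
  proof -
    have "(real_of_int p / real_of_int q) * (real_of_int (l + q))^2
      + (real_of_int m / real_of_int q) * real_of_int (l + q)
      = ((real_of_int p / real_of_int q) * (real_of_int l)^2
      + (real_of_int m / real_of_int q) * real_of_int l) + of_int (2*p*l + p*q + m)"
      using qne by (simp add: field_simps power2_eq_square)
    note eq = this
    show ?thesis unfolding F_def qn[symmetric] of_int_add[symmetric] eq ee_add ee_int by simp
  qed
  define S0 where "S0 = (\<Sum>i<n. F (int i))"
  have "gauss_S p q (real_of_int m / real_of_int q) = (\<Sum>l=1..q. F l)"
    unfolding gauss_S_def F_def ee_def by simp
  also have "\<dots> = (\<Sum>i<n. F (1 + int i))"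
    by (rule sum.reindex_bij_witness[of _ "\<lambda>b. 1 + int b" "\<lambda>l. nat (l - 1)"]) (auto simp: qn)
  also have "\<dots> = S0" unfolding S0_def by (rule periodic_shift_sum[where F=F and n=n, OF per])
  finally have SS: "gauss_S p q (real_of_int m / real_of_int q) = S0" .
  define \<zeta> where "\<zeta> h = ee (2 * real_of_int p * real h / real_of_int q)" for h :: nat
  define c where "c h = ee ((real_of_int p * (real h)^2 + real_of_int m * real h) / real_of_int q)" for h :: nat
  have key: "cnj (F (int j)) * F (int j + int h) = c h * \<zeta> h ^ j" for j h
  proof -
    have "cnj (F (int j)) * F (int j + int h) = ee (- ((real_of_int p / real_of_int q) * (real j)^2
      + (real_of_int m / real_of_int q) * real j) + ((real_of_int p / real_of_int q) * (real j + real h)^2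
      + (real_of_int m / real_of_int q) * (real j + real h)))"
      unfolding F_def cnj_ee ee_add[symmetric] by (rule arg_cong[where f = ee]) simp
    also have "\<dots> = ee ((real_of_int p * (real h)^2 + real_of_int m * real h) / real_of_int q
        + real j * (2 * real_of_int p * real h / real_of_int q))"
      by (rule arg_cong[where f = ee]) (use qne in \<open>simp add: field_simps power2_eq_square\<close>)
    also have "\<dots> = c h * \<zeta> h ^ j" unfolding c_def \<zeta>_def by (simp add: ee_add ee_pow)
    finally show ?thesis .
  qed
  have "S0 * cnj S0 = (\<Sum>j<n. cnj (F (int j)) * S0)"
    unfolding S0_def[of] by (simp add: sum_distrib_left sum_distrib_right mult_ac)
  also have "\<dots> = (\<Sum>j<n. \<Sum>h<n. cnj (F (int j)) * F (int j + int h))"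
  proof (rule sum.cong[OF refl])
    fix j assume "j \<in> {..<n}"
    have "S0 = (\<Sum>h<n. F (int j + int h))"
      unfolding S0_def by (rule periodic_shift_sum[where F=F and n=n, OF per, symmetric])
    then show "cnj (F (int j)) * S0 = (\<Sum>h<n. cnj (F (int j)) * F (int j + int h))"
      by (simp add: sum_distrib_left)
  qed
  also have "\<dots> = (\<Sum>j<n. \<Sum>h<n. c h * \<zeta> h ^ j)" by (simp add: key)
  also have "\<dots> = (\<Sum>h<n. c h * (\<Sum>j<n. \<zeta> h ^ j))"
    by (subst sum.swap) (simp add: sum_distrib_left)
  finally have prod: "S0 * cnj S0 = (\<Sum>h<n. c h * (\<Sum>j<n. \<zeta> h ^ j))" .
  have each: "norm (c h * (\<Sum>j<n. \<zeta> h ^ j)) \<le> (if int n dvd 2 * int h then real n else 0)" for h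
  proof (cases "\<zeta> h = 1")
    case True
    then obtain k :: int where k: "2 * real_of_int p * real h / real_of_int q = of_int k"
      unfolding \<zeta>_def using ee_eq_1 by blast
    then have "2 * real_of_int p * real h = of_int k * real_of_int q" using qne by (simp add: field_simps)
    then have "real_of_int (p * (2 * int h)) = real_of_int (q * k)" by (simp add: mult_ac)
    then have "p * (2 * int h) = q * k" by (simp only: of_int_eq_iff)
    then have "q dvd p * (2 * int h)" unfolding dvd_def by blast
    then have "q dvd 2 * int h" using cop by (simp add: coprime_commute coprime_dvd_mult_right_iff)
    then show ?thesis using True by (simp add: c_def qn norm_mult)
  next
    case False
    have "\<zeta> h ^ n = ee (of_int (2 * p * int h))"
      unfolding \<zeta>_def ee_pow using qne qr by (simp add: field_simps)
    then have "\<zeta> h ^ n = 1" using ee_int[of "2 * p * int h"] by simp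
    then have "(\<Sum>j<n. \<zeta> h ^ j) = 0" using False by (simp add: sum_gp_strict)
    then show ?thesis by simp
  qed
  have "norm (S0 * cnj S0) \<le> (\<Sum>h<n. norm (c h * (\<Sum>j<n. \<zeta> h ^ j)))"
    unfolding prod by (rule norm_sum)
  also have "\<dots> \<le> (\<Sum>h<n. if int n dvd 2 * int h then real n else 0)"
    by (rule sum_mono) (rule each)
  also have "\<dots> \<le> 2 * real n" by (rule count_bound)
  finally have "norm (S0 * cnj S0) \<le> 2 * real n" .
  moreover have "norm (S0 * cnj S0) = (cmod S0)^2"
    by (simp add: norm_mult power2_eq_square)
  ultimately have "(cmod S0)^2 \<le> 2 * real_of_int q" using qr by simp
  then show ?thesis unfolding SS by (simp add: real_le_rsqrt)
qed

lemma Re_mult_ofr: "Re (w * complex_of_real s) = Re w * s"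
  by (simp add: complex_of_real_def)

lemma geom_int:
  fixes B :: real
  assumes B: "B > 0"
  shows "((\<lambda>k::int. exp (- B * \<bar>real_of_int k\<bar>)) has_sum
           (2 * (exp (- B) / (1 - exp (- B))))) (UNIV - {0})"
proof -
  define r where "r = exp (- B)"
  have r0: "0 < r" "r < 1" unfolding r_def using B by auto
  define H where "H k = exp (- B * \<bar>real_of_int k\<bar>)" for k :: int
  have g: "((\<lambda>n. r ^ n) has_sum (r / (1 - r))) {1::nat..}"
    by (rule has_sum_geometric_from_1) (use r0 in simp)
  have Hn: "H (int n) = r ^ n" "H (- int n) = r ^ n" for n
    unfolding H_def r_def by (simp_all add: exp_of_nat_mult[symmetric] mult_ac)
  have g1: "((H \<circ> int) has_sum (r / (1 - r))) {1..}"
    by (rule has_sum_cong[THEN iffD2, OF _ g]) (simp add: Hn)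
  have g2: "((H \<circ> (\<lambda>n. - int n)) has_sum (r / (1 - r))) {1..}"
    by (rule has_sum_cong[THEN iffD2, OF _ g]) (simp add: Hn)
  have inj1: "inj_on int {1..}" by (simp add: inj_on_def)
  have inj2: "inj_on (\<lambda>n. - int n) {1..}" by (simp add: inj_on_def)
  have "(H has_sum (r / (1 - r))) (int ` {1..})"
    using has_sum_reindex[OF inj1] g1 by blast
  moreover have "(H has_sum (r / (1 - r))) ((\<lambda>n. - int n) ` {1..})"
    using has_sum_reindex[OF inj2] g2 by blast
  ultimately have "(H has_sum (r / (1 - r) + r / (1 - r))) (int ` {1..} \<union> (\<lambda>n. - int n) ` {1..})"
    by (rule has_sum_Un_disjoint) auto
  moreover have "int ` {1..} \<union> (\<lambda>n. - int n) ` {1..} = UNIV - {0}"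
  proof (rule set_eqI)
    fix k :: int
    show "k \<in> int ` {1..} \<union> (\<lambda>n. - int n) ` {1..} \<longleftrightarrow> k \<in> UNIV - {0}"
    proof
      assume "k \<in> UNIV - {0}"
      then have "k > 0 \<or> k < 0" by auto
      then show "k \<in> int ` {1..} \<union> (\<lambda>n. - int n) ` {1..}"
      proof
        assume "k > 0" then have "k = int (nat k) \<and> nat k \<in> {1..}" by auto
        then show ?thesis by blast
      next
        assume "k < 0" then have "k = - int (nat (- k)) \<and> nat (- k) \<in> {1..}" by auto
        then show ?thesis by blast
      qed
    qed auto
  qed
  ultimately show ?thesis unfolding H_def r_def by simp
qed

lemma geom_bound:
  fixes B :: real
  assumes B: "B > 0"
  shows "2 * (exp (- B) / (1 - exp (- B))) \<le> 2 / B"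
proof -
  have e: "exp (- B) / (1 - exp (- B)) = 1 / (exp B - 1)"
    using B by (simp add: exp_minus field_simps)
  have "B \<le> exp B - 1" using exp_ge_add_one_self[of B] by linarith
  then have "1 / (exp B - 1) \<le> 1 / B" using B by (intro divide_left_mono) auto
  then show ?thesis unfolding e by simp
qed

lemma final_arith:
  fixes y Q r NR K G :: real
  assumes y: "y > 0" and Q: "Q > 0" and r: "r > 0" and NR: "NR > 0" and K: "K > 0"
    and qr: "Q * r \<le> K * y powr (1/2)"
    and G: "G \<le> 2 / (pi * y / r^2 / (Q * NR)^2)"
  shows "sqrt (2 * Q) * G / (Q * sqrt r) \<le> (2 * sqrt 2 * NR^2 / pi * K * sqrt K) * y powr (-1/4)"
proof -
  define u where "u = y powr (1/4)"
  have u0: "u > 0" unfolding u_def using y by simp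
  have yu: "y = u^4" unfolding u_def using y by (simp add: powr_realpow[symmetric] powr_powr)
  have y2: "y powr (1/2) = u^2" unfolding u_def using y by (simp add: powr_realpow[symmetric] powr_powr)
  have y4: "y powr (-1/4) = 1 / u" unfolding u_def using y by (simp add: powr_minus_divide)
  obtain a where a: "a > 0" "Q = a^2" "sqrt Q = a" using Q
    by (metis real_sqrt_gt_zero real_sqrt_pow2 order_less_imp_le)
  obtain b where b: "b > 0" "r = b^2" "sqrt r = b" using r
    by (metis real_sqrt_gt_zero real_sqrt_pow2 order_less_imp_le)
  obtain c where c: "c > 0" "K = c^2" "sqrt K = c" using K
    by (metis real_sqrt_gt_zero real_sqrt_pow2 order_less_imp_le)
  have ab: "(a*b)^2 \<le> (c*u)^2" using qr a b c y2 by (simp add: power_mult_distrib)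
  then have ab': "a * b \<le> c * u" using a b c u0
    by (meson mult_pos_pos order_less_imp_le power2_le_imp_le)
  have "sqrt (2 * Q) * G / (Q * sqrt r) = sqrt 2 * a * G / (Q * b)"
    using a b by (simp add: real_sqrt_mult)
  also have "\<dots> \<le> sqrt 2 * a * (2 / (pi * y / r^2 / (Q * NR)^2)) / (Q * b)"
    using G a b Q by (intro divide_right_mono mult_left_mono) auto
  also have "\<dots> = (2 * sqrt 2 * NR^2 / pi) * ((a*b)^2 * (a * b)) / u^4"
    using a b u0 NR yu by (simp add: field_simps power2_eq_square power4_eq_xxxx)
  also have "\<dots> \<le> (2 * sqrt 2 * NR^2 / pi) * ((c*u)^2 * (c * u)) / u^4"
  proof -
    have "(a*b)^2 * (a * b) \<le> (c*u)^2 * (c * u)"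
      by (rule mult_mono[OF ab ab']) (use a b in auto)
    then show ?thesis using u0 by (intro divide_right_mono mult_left_mono) auto
  qed
  also have "\<dots> = (2 * sqrt 2 * NR^2 / pi * K * sqrt K) * y powr (-1/4)"
    using c u0 y4 by (simp add: field_simps power2_eq_square power4_eq_xxxx)
  finally show ?thesis .
qed


theorem lemma1:
  fixes N :: nat and C1 C2 :: real
  assumes "N > 1" and "C1 > 0" and "C2 > 0"
  shows "\<exists>C::real. \<forall>y p q \<delta>.
     0 < y \<and> y \<le> 1 \<and> q \<ge> 1 \<and> coprime p q \<and>
     0 < real_of_int p / real_of_int q \<and> real_of_int p / real_of_int q \<le> 1 \<and>
     real_of_int q \<le> C1 * y powr (-1/2) \<and> real_of_int q * \<bar>\<delta>\<bar> \<le> C2 * y powr (1/2) \<longrightarrow>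
     (int N dvd q \<longrightarrow>
        cmod (T_y N y p q \<delta> - gauss_S p q (1 / real N) /
          (of_int q * csqrt (complex_of_real y + 2 * \<i> * complex_of_real \<delta>))) \<le> C * y powr (-1/4)) \<and>
     (\<not> int N dvd q \<longrightarrow> cmod (T_y N y p q \<delta>) \<le> C * y powr (-1/4))"
proof -
  define K where "K = C1 + 2 * C2"
  have K0: "K > 0" unfolding K_def using assms by simp
  define NR where "NR = real N"
  have NR0: "NR > 0" unfolding NR_def using assms by simp
  define C where "C = 2 * sqrt 2 * NR^2 / pi * K * sqrt K"
  show ?thesis
  proof (rule exI[of _ C], intro allI impI)
    fix y \<delta> :: real and p q :: int
    assume hyp: "0 < y \<and> y \<le> 1 \<and> q \<ge> 1 \<and> coprime p q \<and>
     0 < real_of_int p / real_of_int q \<and> real_of_int p / real_of_int q \<le> 1 \<and>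
     real_of_int q \<le> C1 * y powr (-1/2) \<and> real_of_int q * \<bar>\<delta>\<bar> \<le> C2 * y powr (1/2)"
    then have y0: "0 < y" and q1: "q \<ge> 1" and cop: "coprime p q"
      and qC1: "real_of_int q \<le> C1 * y powr (-1/2)"
      and qd: "real_of_int q * \<bar>\<delta>\<bar> \<le> C2 * y powr (1/2)" by auto
    define z where "z = complex_of_real y + 2 * \<i> * complex_of_real \<delta>"
    define r where "r = cmod z"
    define Q where "Q = real_of_int q"
    have Q0: "Q > 0" unfolding Q_def using q1 by simp
    have Rez: "Re z = y" "Im z = 2 * \<delta>" by (simp_all add: z_def)
    have z0: "z \<noteq> 0" using Rez y0 by auto
    have r0: "r > 0" unfolding r_def using z0 by simp
    have r2: "r^2 = y^2 + (2 * \<delta>)^2" unfolding r_def cmod_power2 Rez ..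
    define A where "A = pi * y / r^2"
    have ReA: "Re (complex_of_real pi / z) = A"
      unfolding A_def r_def by (simp add: Re_divide' Rez)
    define B where "B = A / (Q * NR)^2"
    have B0: "B > 0" unfolding B_def A_def using y0 r0 Q0 NR0 by simp
    define kk where "kk m = m * int N - q" for m :: int
    define H where "H k = exp (- B * \<bar>real_of_int k\<bar>)" for k :: int
    define f where "f m = gauss_S p q (real_of_int m / real_of_int q) *
        exp (- (complex_of_real pi / z) * complex_of_real ((real_of_int m / real_of_int q - 1 / real N)^2))"
      for m :: int
    have tm: "real_of_int m / real_of_int q - 1 / real N = real_of_int (kk m) / (Q * NR)" for m
      unfolding kk_def Q_def NR_def using Q0 NR0 Q_def NR_def by (simp add: field_simps)
    have fb: "norm (f m) \<le> sqrt (2 * Q) * H (kk m)" for m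
    proof -
      have e: "norm (exp (- (complex_of_real pi / z) * complex_of_real ((real_of_int m / real_of_int q - 1 / real N)^2)))
          = exp (- B * (real_of_int (kk m))^2)"
        unfolding tm norm_exp_eq_Re Re_mult_ofr using ReA Q0 NR0 by (simp add: B_def power_divide)
      have kabs: "\<bar>real_of_int (kk m)\<bar> \<le> (real_of_int (kk m))^2"
      proof (cases "kk m = 0")
        case False
        then have "1 \<le> \<bar>real_of_int (kk m)\<bar>" by linarith
        then have "\<bar>real_of_int (kk m)\<bar> * 1 \<le> \<bar>real_of_int (kk m)\<bar> * \<bar>real_of_int (kk m)\<bar>"
          by (intro mult_left_mono) auto
        then show ?thesis by (simp add: power2_eq_square)
      qed simp
      have "exp (- B * (real_of_int (kk m))^2) \<le> H (kk m)"
        unfolding H_def using kabs B0 by simp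
      moreover have "norm (gauss_S p q (real_of_int m / real_of_int q)) \<le> sqrt (2 * Q)"
        unfolding Q_def by (rule gauss_bound[OF q1 cop])
      ultimately show ?thesis unfolding f_def norm_mult e
        using Q0 by (intro mult_mono) auto
    qed
    define G where "G = 2 * (exp (- B) / (1 - exp (- B)))"
    have geo: "(H has_sum G) (UNIV - {0})" unfolding H_def G_def by (rule geom_int[OF B0])
    have GB: "G \<le> 2 / B" unfolding G_def by (rule geom_bound[OF B0])
    have Hnn: "H k \<ge> 0" for k unfolding H_def by simp
    have Hsum: "H summable_on UNIV"
    proof -
      have "H summable_on (UNIV - {0})" using geo by (auto simp: summable_on_def)
      then have "H summable_on insert 0 (UNIV - {0})" by (simp only: summable_on_insert_iff)
      then show ?thesis by (simp add: insert_absorb)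
    qed
    have injkk: "inj_on kk X" for X
      unfolding kk_def inj_on_def using assms(1) by simp
    have Hkk: "(H \<circ> kk) summable_on X" for X
    proof -
      have "H summable_on (kk ` X)" by (rule summable_on_subset_banach[OF Hsum]) auto
      then show ?thesis using summable_on_reindex[OF injkk] by blast
    qed
    have fabs: "(\<lambda>x. norm (f x)) summable_on X" for X
      by (rule summable_on_comparison_test[where f = "\<lambda>m. sqrt (2 * Q) * H (kk m)"])
         (use Hkk[of X] fb in \<open>auto simp: o_def intro: summable_on_cmult_right\<close>)
    have fsum: "f summable_on X" for X by (rule abs_summable_summable[OF fabs])
    have bound: "norm (infsum f X) \<le> sqrt (2 * Q) * G" if X: "\<And>m. m \<in> X \<Longrightarrow> kk m \<noteq> 0" for X
    proof -
      have "norm (infsum f X) \<le> infsum (\<lambda>m. norm (f m)) X" by (rule norm_infsum_bound[OF fabs])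
      also have "\<dots> \<le> infsum (\<lambda>m. sqrt (2 * Q) * H (kk m)) X"
        by (rule infsum_mono[OF fabs]) (use Hkk[of X] fb in \<open>auto simp: o_def intro: summable_on_cmult_right\<close>)
      also have "\<dots> = sqrt (2 * Q) * infsum (H \<circ> kk) X"
        by (simp add: infsum_cmult_right' o_def)
      also have "\<dots> = sqrt (2 * Q) * infsum H (kk ` X)"
        by (simp add: infsum_reindex[OF injkk])
      also have "\<dots> \<le> sqrt (2 * Q) * infsum H (UNIV - {0})"
      proof (intro mult_left_mono)
        show "infsum H (kk ` X) \<le> infsum H (UNIV - {0})"
          by (rule infsum_mono_neutral[OF summable_on_subset_banach[OF Hsum] has_sum_imp_summable[OF geo]])
             (use X Hnn in auto)
      qed (use Q0 in simp)
      also have "\<dots> = sqrt (2 * Q) * G" using geo by (simp add: infsumI)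
      finally show ?thesis .
    qed
    have qr: "Q * r \<le> K * y powr (1/2)"
    proof -
      have "r \<le> y + 2 * \<bar>\<delta>\<bar>"
        unfolding r_def z_def using norm_triangle_ineq[of "complex_of_real y" "2 * \<i> * complex_of_real \<delta>"] y0
        by (simp add: norm_mult)
      then have "Q * r \<le> Q * (y + 2 * \<bar>\<delta>\<bar>)" using Q0 by (intro mult_left_mono) auto
      also have "\<dots> = Q * y + 2 * (Q * \<bar>\<delta>\<bar>)" by (simp add: algebra_simps)
      also have "Q * y \<le> C1 * y powr (1/2)"
      proof -
        have "Q * y \<le> C1 * y powr (-1/2) * y" using qC1 y0 unfolding Q_def by (simp add: mult_right_mono)
        also have "C1 * y powr (-1/2) * y = C1 * y powr (1/2)"
        proof -
          have "y powr (-1/2) * y powr 1 = y powr (-1/2 + 1)" by (rule powr_add[symmetric])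
          then have "y powr (-1/2) * y = y powr (1/2)" using y0 by simp
          then show ?thesis by (simp add: mult.assoc)
        qed
        finally show ?thesis .
      qed
      then have "Q * y + 2 * (Q * \<bar>\<delta>\<bar>) \<le> C1 * y powr (1/2) + 2 * (C2 * y powr (1/2))"
        using qd unfolding Q_def by simp
      also have "\<dots> = K * y powr (1/2)" unfolding K_def by (simp add: algebra_simps)
      finally show ?thesis .
    qed
    have fin: "sqrt (2 * Q) * G / (Q * sqrt r) \<le> C * y powr (-1/4)"
      unfolding C_def
      by (rule final_arith[OF y0 Q0 r0 NR0 K0 qr]) (use GB in \<open>simp add: B_def A_def\<close>)
    have Tdef: "T_y N y p q \<delta> = 1 / (of_int q * csqrt z) * infsum f UNIV"
      unfolding T_y_def f_def z_def ..
    have nfac: "norm (1 / (of_int q * csqrt z)) = 1 / (Q * sqrt r)"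
      unfolding r_def Q_def using q1 by (simp add: norm_divide norm_mult)
    have main: "cmod (1 / (of_int q * csqrt z) * infsum f X) \<le> C * y powr (-1/4)"
      if X: "\<And>m. m \<in> X \<Longrightarrow> kk m \<noteq> 0" for X
    proof -
      have "cmod (1 / (of_int q * csqrt z) * infsum f X) = norm (infsum f X) / (Q * sqrt r)"
        unfolding norm_mult nfac by simp
      also have "\<dots> \<le> sqrt (2 * Q) * G / (Q * sqrt r)"
        using bound[OF X] Q0 r0 by (intro divide_right_mono) auto
      also have "\<dots> \<le> C * y powr (-1/4)" by (rule fin)
      finally show ?thesis .
    qed
    show "(int N dvd q \<longrightarrow>
        cmod (T_y N y p q \<delta> - gauss_S p q (1 / real N) /
          (of_int q * csqrt (complex_of_real y + 2 * \<i> * complex_of_real \<delta>))) \<le> C * y powr (-1/4)) \<and>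
     (\<not> int N dvd q \<longrightarrow> cmod (T_y N y p q \<delta>) \<le> C * y powr (-1/4))"
    proof (intro conjI impI)
      assume nd: "\<not> int N dvd q"
      have "kk m \<noteq> 0" for m
      proof
        assume "kk m = 0"
        then have "q = int N * m" unfolding kk_def by (simp add: algebra_simps)
        then show False using nd by simp
      qed
      then show "cmod (T_y N y p q \<delta>) \<le> C * y powr (-1/4)"
        unfolding Tdef by (intro main) auto
    next
      assume "int N dvd q"
      then obtain m0 where m0: "q = int N * m0" by (auto elim: dvdE)
      define X where "X = UNIV - {m0}"
      have X: "kk m \<noteq> 0" if "m \<in> X" for m
      proof
        assume "kk m = 0"
        then have "int N * m = int N * m0" using m0 unfolding kk_def by (simp add: algebra_simps)
        then have "m = m0" using assms(1) by simp
        then show False using that unfolding X_def by simp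
      qed
      have m0q: "real_of_int m0 / real_of_int q = 1 / real N"
      proof -
        have "real_of_int q = real N * real_of_int m0" using m0 by simp
        moreover have "real_of_int m0 \<noteq> 0" using m0 q1 by auto
        ultimately show ?thesis by simp
      qed
      have fm0: "f m0 = gauss_S p q (1 / real N)" unfolding f_def m0q by simp
      have "infsum f UNIV = infsum f (insert m0 X)" unfolding X_def by (simp add: insert_absorb)
      also have "\<dots> = f m0 + infsum f X" by (rule infsum_insert[OF fsum]) (simp add: X_def)
      finally have split: "infsum f UNIV = gauss_S p q (1 / real N) + infsum f X" unfolding fm0 .
      have "T_y N y p q \<delta> - gauss_S p q (1 / real N) / (of_int q * csqrt z)
            = 1 / (of_int q * csqrt z) * infsum f X"
        unfolding Tdef split by (simp add: algebra_simps)
      then show "cmod (T_y N y p q \<delta> - gauss_S p q (1 / real N) /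
          (of_int q * csqrt (complex_of_real y + 2 * \<i> * complex_of_real \<delta>))) \<le> C * y powr (-1/4)"
        using main[of X] X unfolding z_def by auto
    qed
  qed
qed

end
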